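(* Let $H$ be a string, $s\ge0$ an integer, and $j\in\mathsf{R}_{s,H}$. For any $j'\in[1\mathinner{.\,.}n]$, $\mathrm{LCE}(j,j')\ge3\tau-1$ holds if and only if $j'\in\mathsf{R}_{s,H}$. Moreover, if $j'\in\mathsf{R}_{s,H}$ then, letting $t=\mathrm{end}(j)-j$ and $t'=\mathrm{end}(j')-j'$, it holds $\mathrm{LCE}(j,j')\ge\min(t,t')$ and: (1) if $\mathrm{type}(j)\ne\mathrm{type}(j')$, then $T[j\mathinner{.\,.}n]\prec T[j'\mathinner{.\,.}n]$ iff $\mathrm{type}(j)<\mathrm{type}(j')$; (2) if $\mathrm{type}(j)=\mathrm{type}(j')=-1$ and $t\ne t'$, then $T[j\mathinner{.\,.}n]\prec T[j'\mathinner{.\,.}n]$ iff $t<t'$; (3) if $\mathrm{type}(j)=\mathrm{type}(j')=+1$ and $t\ne t'$, then $T[j\mathinner{.\,.}n]\prec T[j'\mathinner{.\,.}n]$ iff $t>t'$; (4) if $\mathrm{type}(j)\ne\mathrm{type}(j')$ or $t\ne t'$, then $\mathrm{LCE}(j,j')=\min(t,t')$.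
   Context: $T\in[0\mathinner{.\,.}\sigma)^n$ with $2\le\sigma<n^{1/7}$; $\tau=\lfloor\mu\log_\sigma n\rfloor$ for a fixed positive constant $\mu<1/6$ with $\tau\ge1$. $\prec$ is lexicographic order. $\mathrm{per}(S)$ is the shortest period of $S$. $\mathsf{R}=\{i\in[1\mathinner{.\,.}n-3\tau+2]:\mathrm{per}(T[i\mathinner{.\,.}i+3\tau-2])\le\tau/3\}$. $\mathrm{LCE}(i,i')$ is the length of the longest common prefix of $T[i\mathinner{.\,.}n]$ and $T[i'\mathinner{.\,.}n]$. For $j\in\mathsf{R}$: $\mathrm{end}(j)=\min\{j'\ge j:j'\notin\mathsf{R}\}+3\tau-2$; with $p=\mathrm{per}(T[j\mathinner{.\,.}j+3\tau-1))$, $\mathrm{Lroot}(j)=\min\{T[j+t\mathinner{.\,.}j+t+p):t\in[0\mathinner{.\,.}p)\}$ (lexicographic minimum). With $H=\mathrm{Lroot}(j)$, $T[j\mathinner{.\,.}\mathrm{end}(j))$ can be uniquely written as $H'H^kH''$ with $H'$ a proper suffix and $H''$ a proper prefix of $H$ (the L-decomposition); $\mathrm{Lhead}(j)=|H'|$. $\mathrm{type}(j)=+1$ if $\mathrm{end}(j)\le n$ and $T[\mathrm{end}(j)]\succ T[\mathrm{end}(j)-|H|]$, and $\mathrm{type}(j)=-1$ otherwise. $\mathsf{R}_{s,H}=\{j\in\mathsf{R}:\mathrm{Lroot}(j)=H,\ \mathrm{Lhead}(j)=s\}$. *)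

theory Defs
  imports Complex_Main "HOL-Library.Sublist" "HOL-Library.List_Lexorder"
begin

(* Conventions: the text T is a list of naturals, positions are 1-based:
   T[i] = T ! (i-1); n = length T.  Lexicographic order on strings is the
   order "<" from List_Lexorder (a proper prefix is smaller). *)

definition sub :: "nat list \<Rightarrow> nat \<Rightarrow> nat \<Rightarrow> nat list" where
  "sub T i j = take (j - i) (drop (i - 1) T)"

definition suf :: "nat list \<Rightarrow> nat \<Rightarrow> nat list" where
  "suf T i = drop (i - 1) T"

definition is_period :: "'a list \<Rightarrow> nat \<Rightarrow> bool" where
  "is_period S p \<longleftrightarrow> 0 < p \<and> p \<le> length S \<and> (\<forall>i. i + p < length S \<longrightarrow> S ! i = S ! (i + p))"

definition per :: "'a list \<Rightarrow> nat" where
  "per S = (LEAST p. is_period S p)"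

definition Rset :: "nat list \<Rightarrow> nat \<Rightarrow> nat set" where
  "Rset T \<tau> = {i. 1 \<le> i \<and> i + 3 * \<tau> \<le> length T + 2 \<and>
                 real (per (sub T i (i + 3 * \<tau> - 1))) \<le> real \<tau> / 3}"

definition LCE :: "nat list \<Rightarrow> nat \<Rightarrow> nat \<Rightarrow> nat" where
  "LCE T i i' = length (longest_common_prefix (suf T i) (suf T i'))"

definition endp :: "nat list \<Rightarrow> nat \<Rightarrow> nat \<Rightarrow> nat" where
  "endp T \<tau> j = (LEAST j'. j \<le> j' \<and> j' \<notin> Rset T \<tau>) + 3 * \<tau> - 2"

definition Lroot :: "nat list \<Rightarrow> nat \<Rightarrow> nat \<Rightarrow> nat list" where
  "Lroot T \<tau> j = (let p = per (sub T j (j + 3 * \<tau> - 1)) in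
                    Min {sub T (j + t) (j + t + p) | t. t < p})"

definition Lhead :: "nat list \<Rightarrow> nat \<Rightarrow> nat \<Rightarrow> nat" where
  "Lhead T \<tau> j = (let H = Lroot T \<tau> j in
     THE s. \<exists>H' k H''. sub T j (endp T \<tau> j) = H' @ concat (replicate k H) @ H'' \<and>
        strict_suffix H' H \<and> strict_prefix H'' H \<and> length H' = s)"

definition ltype :: "nat list \<Rightarrow> nat \<Rightarrow> nat \<Rightarrow> int" where
  "ltype T \<tau> j = (let e = endp T \<tau> j; H = Lroot T \<tau> j in
     if e \<le> length T \<and> T ! (e - 1) > T ! (e - length H - 1) then 1 else -1)"

definition RsH :: "nat list \<Rightarrow> nat \<Rightarrow> nat \<Rightarrow> nat list \<Rightarrow> nat set" where
  "RsH T \<tau> s H = {j \<in> Rset T \<tau>. Lroot T \<tau> j = H \<and> Lhead T \<tau> j = s}"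

end

theory Submission
  imports Defs
begin


lemma take_eq_nth:
  assumes "m \<le> length u" "m \<le> length u'" "\<forall>i<m. u!i = u'!i"
  shows "take m u = take m u'"
  using assms by (intro nth_equalityI) auto

lemma lcp_ge:
  assumes "m \<le> length u" "m \<le> length u'" "\<forall>i<m. u!i = u'!i"
  shows "m \<le> length (longest_common_prefix u u')"
proof -
  have "prefix (take m u) (longest_common_prefix u u')"
    using take_eq_nth[OF assms] by (metis longest_common_prefix_max_prefix take_is_prefix)
  then show ?thesis using assms(1) by (metis length_take min.absorb2 prefix_length_le)
qed

lemma lcp_ge_nth:
  assumes "m \<le> length (longest_common_prefix u u')"
  shows "m \<le> length u" "m \<le> length u'" "\<forall>i<m. u!i = u'!i"
proof -
  let ?l = "longest_common_prefix u u'"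
  have p1: "prefix ?l u" and p2: "prefix ?l u'"
    by (rule longest_common_prefix_prefix1, rule longest_common_prefix_prefix2)
  show "m \<le> length u" using p1 assms prefix_length_le le_trans by blast
  show "m \<le> length u'" using p2 assms prefix_length_le le_trans by blast
  show "\<forall>i<m. u!i = u'!i"
    using p1 p2 assms by (metis dual_order.strict_trans1 nth_take prefix_def append_take_drop_id
        nth_append)
qed

lemma lt_at:
  fixes u u' :: "nat list"
  assumes "m \<le> length u" "m < length u'" "\<forall>i<m. u!i = u'!i" "m < length u \<Longrightarrow> u!m < u'!m"
  shows "u < u'" "length (longest_common_prefix u u') = m" "length (longest_common_prefix u' u) = m"
proof -
  show "u < u'"
  proof (cases "m < length u")
    case True
    then show ?thesis unfolding list_less_def lexord_take_index_conv
      using assms take_eq_nth[of m u u'] by (intro disjI2 exI[of _ m]) auto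
  next
    case False
    then have "m = length u" using assms by simp
    then show ?thesis unfolding list_less_def lexord_take_index_conv
      using assms take_eq_nth[of m u u'] by auto
  qed
  have ge: "m \<le> length (longest_common_prefix u u')" "m \<le> length (longest_common_prefix u' u)"
    using assms by (auto intro!: lcp_ge)
  show "length (longest_common_prefix u u') = m"
  proof (rule ccontr)
    assume "length (longest_common_prefix u u') \<noteq> m"
    then have "Suc m \<le> length (longest_common_prefix u u')" using ge by simp
    from lcp_ge_nth[OF this] assms show False by fastforce
  qed
  show "length (longest_common_prefix u' u) = m"
  proof (rule ccontr)
    assume "length (longest_common_prefix u' u) \<noteq> m"
    then have "Suc m \<le> length (longest_common_prefix u' u)" using ge by simp
    from lcp_ge_nth[OF this] assms show False by fastforce
  qed
qed



definition tyv :: "nat list \<Rightarrow> nat \<Rightarrow> nat \<Rightarrow> bool" where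
  "tyv u t p = (t < length u \<and> u!(t-p) < u!t)"

lemma half:
  fixes u u' :: "nat list"
  assumes "0 < p" "p \<le> t" "t < t'" "t \<le> length u" "t' \<le> length u'"
    "\<forall>i<t. u!i = u'!i" "\<forall>i. i + p < t' \<longrightarrow> u'!i = u'!(i+p)"
    "t < length u \<Longrightarrow> u!t \<noteq> u!(t-p)"
  shows "(if tyv u t p then u' < u else u < u') \<and> length (longest_common_prefix u u') = t
     \<and> length (longest_common_prefix u' u) = t"
proof -
  have e1: "u'!(t-p) = u'!(t-p+p)" using assms(2,3,7) by simp
  have e2: "u'!(t-p) = u!(t-p)" using assms(1,2,6) by simp
  have e: "u'!t = u!(t-p)" using e1 e2 assms(2) by simp
  show ?thesis
  proof (cases "tyv u t p")
    case True
    then have "t < length u" "u'!t < u!t" using e by (auto simp: tyv_def)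
    then show ?thesis using True lt_at[of t u' u] assms by auto
  next
    case False
    then have "t < length u \<Longrightarrow> u!t < u'!t" using e assms(8) by (auto simp: tyv_def)
    then show ?thesis using False lt_at[of t u u'] assms by auto
  qed
qed

lemma half2:
  fixes u u' :: "nat list"
  assumes "0 < p" "p \<le> t" "t \<le> length u" "t \<le> length u'"
    "\<forall>i<t. u!i = u'!i" "tyv u t p" "\<not> tyv u' t p"
    "t < length u' \<Longrightarrow> u'!t \<noteq> u'!(t-p)"
  shows "u' < u \<and> length (longest_common_prefix u u') = t
     \<and> length (longest_common_prefix u' u) = t"
proof -
  have e: "u'!(t-p) = u!(t-p)" using assms by simp
  have "t < length u" "u!(t-p) < u!t" using assms(6) by (auto simp: tyv_def)
  moreover have "t < length u' \<Longrightarrow> u'!t < u!t" using e assms(7,8) calculation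
    by (auto simp: tyv_def)
  ultimately show ?thesis using lt_at[of t u' u] assms by auto
qed

lemma compare:
  fixes u u' :: "nat list"
  assumes "0 < p" "p \<le> t" "p \<le> t'" "t \<le> length u" "t' \<le> length u'"
    "\<forall>i<min t t'. u!i = u'!i"
    "\<forall>i. i + p < t \<longrightarrow> u!i = u!(i+p)"
    "\<forall>i. i + p < t' \<longrightarrow> u'!i = u'!(i+p)"
    "t < length u \<Longrightarrow> u!t \<noteq> u!(t-p)"
    "t' < length u' \<Longrightarrow> u'!t' \<noteq> u'!(t'-p)"
  shows "min t t' \<le> length (longest_common_prefix u u')
    \<and> (tyv u t p \<noteq> tyv u' t' p \<longrightarrow> (u < u' \<longleftrightarrow> \<not> tyv u t p \<and> tyv u' t' p))
    \<and> (\<not> tyv u t p \<and> \<not> tyv u' t' p \<and> t \<noteq> t' \<longrightarrow> (u < u' \<longleftrightarrow> t < t'))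
    \<and> (tyv u t p \<and> tyv u' t' p \<and> t \<noteq> t' \<longrightarrow> (u < u' \<longleftrightarrow> t > t'))
    \<and> ((tyv u t p \<noteq> tyv u' t' p \<or> t \<noteq> t') \<longrightarrow> length (longest_common_prefix u u') = min t t')"
proof -
  have ge: "min t t' \<le> length (longest_common_prefix u u')"
    using assms by (intro lcp_ge) auto
  consider "t < t'" | "t' < t" | "t = t'" by linarith
  then show ?thesis
  proof cases
    case 1
    have h: "(if tyv u t p then u' < u else u < u') \<and> length (longest_common_prefix u u') = t"
      using half[of p t t' u u'] assms 1 by auto
    show ?thesis
    proof (cases "tyv u t p")
      case True
      then have "u' < u" using h by simp
      then have "\<not> u < u'" by (rule less_not_sym)
      then show ?thesis using ge 1 h True by simp
    next
      case False
      then have "u < u'" using h by simp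
      then show ?thesis using ge 1 h False by simp
    qed
  next
    case 2
    have h: "(if tyv u' t' p then u < u' else u' < u) \<and> length (longest_common_prefix u u') = t'"
      using half[of p t' t u' u] assms 2 by auto
    show ?thesis
    proof (cases "tyv u' t' p")
      case True
      then have "u < u'" using h by simp
      then show ?thesis using ge 2 h True by simp
    next
      case False
      then have "u' < u" using h by simp
      then have "\<not> u < u'" by (rule less_not_sym)
      then show ?thesis using ge 2 h False by simp
    qed
  next
    case 3
    show ?thesis
    proof (cases "tyv u t p = tyv u' t' p")
      case True then show ?thesis using ge 3 by auto
    next
      case False
      then consider "tyv u t p" "\<not> tyv u' t p" | "\<not> tyv u t p" "tyv u' t p" using 3 by auto
      then show ?thesis
      proof cases
        case 1
        then have "u' < u \<and> length (longest_common_prefix u u') = t"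
          using half2[of p t u u'] assms 3 by auto
        moreover have "\<not> u < u'" using calculation less_not_sym by blast
        ultimately show ?thesis using 1 3 by simp
      next
        case 2
        then have "u < u' \<and> length (longest_common_prefix u u') = t"
          using half2[of p t u' u] assms 3 by auto
        then show ?thesis using 2 3 by simp
      qed
    qed
  qed
qed



lemma per_mod:
  assumes "0 < p" "\<forall>i. i + p < length X \<longrightarrow> X!i = X!(i+p)" "a < length X"
  shows "X!a = X!(a mod p)"
  using assms(3)
proof (induction a rule: less_induct)
  case (less a)
  show ?case
  proof (cases "a < p")
    case True then show ?thesis by simp
  next
    case False
    then have "X!(a-p) = X!(a-p+p)" using assms(2) less.prems by simp
    moreover have "X!(a-p) = X!((a-p) mod p)" using less.IH[of "a-p"] less.prems assms(1) False by simp
    moreover have "(a-p) mod p = a mod p" using False by (simp add: le_mod_geq)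
    ultimately show ?thesis using False by simp
  qed
qed

lemma cr:
  assumes "length H = p" "r \<le> p" "i < k*p + r"
  shows "(concat (replicate k H) @ take r H)!i = H!(i mod p)"
  using assms(3)
proof (induction k arbitrary: i)
  case 0
  then show ?case using assms by simp
next
  case (Suc k)
  show ?case
  proof (cases "i < p")
    case True
    then show ?thesis using assms by (simp add: nth_append)
  next
    case False
    then have "(concat (replicate k H) @ take r H)!(i-p) = H!((i-p) mod p)"
      using Suc by simp
    moreover have "(i-p) mod p = i mod p" using False by (simp add: le_mod_geq)
    ultimately show ?thesis using False assms by (simp add: nth_append)
  qed
qed

definition decomp :: "nat list \<Rightarrow> nat list \<Rightarrow> nat \<Rightarrow> bool" where
  "decomp X H s = (\<exists>H' k H''. X = H' @ concat (replicate k H) @ H'' \<and>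
        strict_suffix H' H \<and> strict_prefix H'' H \<and> length H' = s)"

lemma decomp_nth:
  assumes "decomp X H s" "length H = p"
  shows "s < p \<and> (\<forall>i < length X. X!i = H!((i + p - s) mod p))"
proof -
  obtain H' k H'' where X: "X = H' @ concat (replicate k H) @ H''" and
    sf: "strict_suffix H' H" and pf: "strict_prefix H'' H" and l: "length H' = s"
    using assms(1) unfolding decomp_def by blast
  have sp: "s < p" using sf l assms(2) by (metis suffix_length_less)
  have eq: "H = take (p - s) H @ H'" using suffix_take[of H' H] sf l assms(2) by auto
  have H': "H' = drop (p - s) H"
  proof -
    have "drop (p - s) H = drop (p - s) (take (p - s) H @ H')" using eq by simp
    also have "\<dots> = H'" using sp assms(2) by simp
    finally show ?thesis by simp
  qed
  have rp: "length H'' < p" using pf assms(2) by (metis prefix_length_less)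
  have H'': "H'' = take (length H'') H" using pf
    by (metis append_eq_conv_conj prefixE strict_prefix_def)
  have lc: "length (concat (replicate k H)) = k*p" using assms(2) by (simp add: length_concat sum_list_replicate)
  show ?thesis
  proof (intro conjI sp allI impI)
    fix i assume i: "i < length X"
    show "X!i = H!((i + p - s) mod p)"
    proof (cases "i < s")
      case True
      then show ?thesis using X H' l sp assms(2) by (simp add: nth_append add.commute)
    next
      case False
      have "(concat (replicate k H) @ take (length H'') H)!(i-s) = H!((i-s) mod p)"
        using cr[OF assms(2), of "length H''" "i-s" k] rp i False X l assms(2) lc by simp
      moreover have "(i + p - s) mod p = (i - s) mod p" using False
        by (metis Nat.add_diff_assoc2 mod_add_self2 not_less)
      ultimately show ?thesis using X l False H'' by (simp add: nth_append)
    qed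
  qed
qed



lemma head:
  assumes p0: "0 < p" and l2: "2*p \<le> length X"
    and per: "\<forall>i. i + p < length X \<longrightarrow> X!i = X!(i+p)"
    and prim: "\<forall>d. 0 < d \<and> d < p \<longrightarrow> \<not> (\<forall>i. i + d < length X \<longrightarrow> X!i = X!(i+d))"
    and H: "H = take p (drop t0 X)" and t0: "t0 < p"
  shows "(THE s. decomp X H s) = t0" "\<forall>i<length X. X!i = H!((i + p - t0) mod p)"
proof -
  have lH: "length H = p" using H l2 t0 by simp
  have nthH: "H!y = X!(t0+y)" if "y < p" for y using H that l2 t0 by simp
  have F: "\<forall>i<length X. X!i = H!((i + p - t0) mod p)"
  proof (intro allI impI)
    fix i assume i: "i < length X"
    have "H!((i + p - t0) mod p) = X!(t0 + (i + p - t0) mod p)" using nthH p0 by simp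
    also have "\<dots> = X!((t0 + (i + p - t0) mod p) mod p)"
      using per_mod[OF p0 per, of "t0 + (i + p - t0) mod p"] l2 t0 p0
      by (metis add_less_mono le_trans less_imp_le_nat mod_less_divisor mult_2 not_less)
    also have "(t0 + (i + p - t0) mod p) mod p = i mod p"
      using t0 by (simp add: mod_add_right_eq)
    also have "X!(i mod p) = X!i" using per_mod[OF p0 per i] by simp
    finally show "X!i = H!((i + p - t0) mod p)" by simp
  qed
  show "\<forall>i<length X. X!i = H!((i + p - t0) mod p)" by (rule F)
  have ex: "decomp X H t0"
    unfolding decomp_def
  proof (intro exI conjI)
    let ?k = "(length X - t0) div p" and ?r = "(length X - t0) mod p"
    show "strict_suffix (drop (p - t0) H) H" using lH t0
      by (metis diff_diff_cancel length_drop less_imp_le_nat nat_neq_iff strict_suffix_def suffix_drop)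
    show "strict_prefix (take ?r H) H" using lH p0
      by (metis length_take min.absorb4 mod_less_divisor nat_less_le prefix_order.le_less take_is_prefix)
    show "length (drop (p - t0) H) = t0" using lH t0 by simp
    have lc: "length (concat (replicate ?k H)) = ?k*p" using lH by (simp add: length_concat sum_list_replicate)
    have lt: "t0 \<le> length X" using l2 t0 by simp
    show "X = drop (p - t0) H @ concat (replicate ?k H) @ take ?r H"
    proof (rule nth_equalityI)
      show "length X = length (drop (p - t0) H @ concat (replicate ?k H) @ take ?r H)"
        using lc lH t0 lt p0 by simp
      fix i assume i: "i < length X"
      show "X!i = (drop (p - t0) H @ concat (replicate ?k H) @ take ?r H)!i"
      proof (cases "i < t0")
        case True
        have "(i + p - t0) mod p = p - t0 + i" using True t0 by simp
        then show ?thesis using True F i lH t0 by (simp add: nth_append)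
      next
        case False
        have "(concat (replicate ?k H) @ take ?r H)!(i-t0) = H!((i-t0) mod p)"
          using cr[OF lH, of ?r "i-t0" ?k] i False p0 lt
          by (metis add_diff_inverse_nat diff_less_mono div_mult_mod_eq less_imp_le_nat mod_less_divisor mult.commute not_less)
        moreover have "(i + p - t0) mod p = (i - t0) mod p" using False
          by (metis Nat.add_diff_assoc2 mod_add_self2 not_less)
        ultimately show ?thesis using F i False lH t0 by (simp add: nth_append)
      qed
    qed
  qed
  show "(THE s. decomp X H s) = t0"
  proof (rule the_equality)
    show "decomp X H t0" by (rule ex)
    fix s assume ds: "decomp X H s"
    from decomp_nth[OF ds lH] have sp: "s < p" and G: "\<forall>i<length X. X!i = H!((i + p - s) mod p)" by auto
    show "s = t0"
    proof (rule ccontr)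
      assume ne: "s \<noteq> t0"
      define d where "d = (if s < t0 then t0 - s else t0 + p - s)"
      have d: "0 < d" "d < p" using ne sp t0 by (auto simp: d_def)
      have "\<forall>i. i + d < length X \<longrightarrow> X!i = X!(i+d)"
      proof (intro allI impI)
        fix i assume i: "i + d < length X"
        have "X!(i+d) = H!((i + d + p - t0) mod p)" using F i by simp
        also have "(i + d + p - t0) mod p = (i + p - s) mod p"
        proof (cases "s < t0")
          case True then show ?thesis by (simp add: d_def)
        next
          case False
          then have "i + d + p - t0 = (i + p - s) + p" using sp t0 by (simp add: d_def)
          then show ?thesis by simp
        qed
        also have "H!((i + p - s) mod p) = X!i" using G i by simp
        finally show "X!i = X!(i+d)" by simp
      qed
      then show False using prim d by blast
    qed
  qed
qed



definition Pw :: "nat list \<Rightarrow> nat \<Rightarrow> nat \<Rightarrow> nat \<Rightarrow> bool" where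
  "Pw T a L q = (\<forall>y. a \<le> y \<and> y + q < a + L \<longrightarrow> T!y = T!(y+q))"

lemma per_basic:
  assumes "S \<noteq> []"
  shows "is_period S (per S)" "\<And>q. is_period S q \<Longrightarrow> per S \<le> q"
proof -
  have w: "is_period S (length S)" using assms by (simp add: is_period_def)
  show "is_period S (per S)" unfolding per_def using w by (rule LeastI)
  show "\<And>q. is_period S q \<Longrightarrow> per S \<le> q" unfolding per_def by (rule Least_le)
qed

lemma PwD: "Pw T a L q \<Longrightarrow> a \<le> y \<Longrightarrow> y + q < a + L \<Longrightarrow> T!y = T!(y+q)"
  unfolding Pw_def by blast

lemma PwI: "(\<And>y. a \<le> y \<Longrightarrow> y + q < a + L \<Longrightarrow> T!y = T!(y+q)) \<Longrightarrow> Pw T a L q"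
  unfolding Pw_def by blast

lemma win:
  assumes "1 \<le> i" "i + 3*\<tau> \<le> length T + 2" "1 \<le> \<tau>"
  shows "length (sub T i (i + 3*\<tau> - 1)) = 3*\<tau> - 1"
    "\<And>x. x < 3*\<tau> - 1 \<Longrightarrow> sub T i (i + 3*\<tau> - 1) ! x = T!(i - 1 + x)"
    "\<And>q. is_period (sub T i (i + 3*\<tau> - 1)) q \<longleftrightarrow> 0 < q \<and> q \<le> 3*\<tau> - 1 \<and> Pw T (i-1) (3*\<tau> - 1) q"
proof -
  show l: "length (sub T i (i + 3*\<tau> - 1)) = 3*\<tau> - 1" using assms by (simp add: sub_def)
  show n: "\<And>x. x < 3*\<tau> - 1 \<Longrightarrow> sub T i (i + 3*\<tau> - 1) ! x = T!(i - 1 + x)"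
    using assms by (simp add: sub_def)
  fix q
  let ?W = "sub T i (i + 3*\<tau> - 1)"
  have d1: "Pw T (i-1) (3*\<tau> - 1) q" if A: "\<forall>x. x + q < 3*\<tau> - 1 \<longrightarrow> ?W ! x = ?W ! (x + q)"
  proof (rule PwI)
    fix y assume y: "i - 1 \<le> y" "y + q < i - 1 + (3*\<tau> - 1)"
    have "?W ! (y - (i-1)) = ?W ! (y - (i-1) + q)" using A y by auto
    moreover have "?W ! (y - (i-1)) = T!(i - 1 + (y - (i-1)))"
      using y by (intro n) linarith
    moreover have "?W ! (y - (i-1) + q) = T!(i - 1 + (y - (i-1) + q))"
      using y by (intro n) linarith
    moreover have "i - 1 + (y - (i-1)) = y" "i - 1 + (y - (i-1) + q) = y + q" using y by auto
    ultimately show "T!y = T!(y+q)" by metis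
  qed
  have d2: "?W ! x = ?W ! (x + q)" if A: "Pw T (i-1) (3*\<tau> - 1) q" "x + q < 3*\<tau> - 1" for x
  proof -
    have "T!(i-1+x) = T!(i-1+x+q)" using A by (intro PwD[OF A(1)]) auto
    then show ?thesis using n A(2) by (simp add: add.assoc)
  qed
  show "is_period ?W q \<longleftrightarrow> 0 < q \<and> q \<le> 3*\<tau> - 1 \<and> Pw T (i-1) (3*\<tau> - 1) q"
    unfolding is_period_def l using d1 d2 by blast
qed

lemma Pw_step1:
  assumes "Pw T a L p" "Pw T (Suc a) L p'" "p \<le> p'" "p + p' < L" "0 < p'"
  shows "Pw T (Suc a) L p"
proof (rule PwI)
  fix y assume y: "Suc a \<le> y" "y + p < Suc a + L"
  show "T!y = T!(y+p)"
  proof (cases "y + p < a + L")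
    case True then show ?thesis using PwD[OF assms(1)] y by simp
  next
    case False
    then have yy: "y + p = a + L" using y by simp
    have 1: "T!(y-p') = T!(y-p'+p')" using yy assms(3,4,5) by (intro PwD[OF assms(2)]) auto
    have 2: "T!(y-p') = T!(y-p'+p)" using yy assms(3,4,5) by (intro PwD[OF assms(1)]) auto
    have 3: "T!(y-p'+p) = T!(y-p'+p+p')" using yy assms(3,4,5) by (intro PwD[OF assms(2)]) auto
    have "y - p' + p' = y" "y-p'+p+p' = y+p" using yy assms(3,4) by auto
    then show ?thesis using 1 2 3 by metis
  qed
qed

lemma Pw_step2:
  assumes "Pw T a L p" "Pw T (Suc a) L p'" "p' \<le> p" "p + p' < L" "0 < p"
  shows "Pw T a L p'"
proof (rule PwI)
  fix y assume y: "a \<le> y" "y + p' < a + L"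
  show "T!y = T!(y+p')"
  proof (cases "y = a")
    case False then show ?thesis using PwD[OF assms(2)] y by simp
  next
    case True
    have 1: "T!a = T!(a+p)" using assms(4) by (intro PwD[OF assms(1)]) auto
    have 2: "T!(a+p) = T!(a+p+p')" using assms(4,5) by (intro PwD[OF assms(2)]) auto
    have 3: "T!(a+p') = T!(a+p'+p)" using assms(4) by (intro PwD[OF assms(1)]) auto
    have "a+p+p' = a+p'+p" by simp
    then show ?thesis using 1 2 3 True by metis
  qed
qed



lemma R_per:
  assumes "i \<in> Rset T \<tau>" "1 \<le> \<tau>"
  shows "0 < per (sub T i (i + 3*\<tau> - 1)) \<and> 3 * per (sub T i (i + 3*\<tau> - 1)) \<le> \<tau>
     \<and> Pw T (i-1) (3*\<tau> - 1) (per (sub T i (i + 3*\<tau> - 1)))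
     \<and> (\<forall>q. 0 < q \<and> q \<le> 3*\<tau> - 1 \<and> Pw T (i-1) (3*\<tau> - 1) q \<longrightarrow> per (sub T i (i + 3*\<tau> - 1)) \<le> q)"
proof -
  let ?W = "sub T i (i + 3*\<tau> - 1)"
  have i: "1 \<le> i" "i + 3*\<tau> \<le> length T + 2" "real (per ?W) \<le> real \<tau> / 3"
    using assms(1) by (auto simp: Rset_def)
  note w = win[OF i(1,2) assms(2)]
  have "length ?W \<noteq> 0" using w(1) assms(2) by simp
  then have ne: "?W \<noteq> []" by auto
  have ip: "is_period ?W (per ?W)" using per_basic(1)[OF ne] .
  show ?thesis
  proof (intro conjI allI impI)
    show "0 < per ?W" using ip w(3) by blast
    show "3 * per ?W \<le> \<tau>" using i(3) by linarith
    show "Pw T (i-1) (3*\<tau> - 1) (per ?W)" using ip w(3) by blast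
    fix q assume "0 < q \<and> q \<le> 3*\<tau> - 1 \<and> Pw T (i-1) (3*\<tau> - 1) q"
    then show "per ?W \<le> q" using per_basic(2)[OF ne] w(3) by blast
  qed
qed

lemma R_step:
  assumes "i \<in> Rset T \<tau>" "Suc i \<in> Rset T \<tau>" "1 \<le> \<tau>"
  shows "per (sub T i (i + 3*\<tau> - 1)) = per (sub T (Suc i) (Suc i + 3*\<tau> - 1))"
proof -
  define p where "p = per (sub T i (i + 3*\<tau> - 1))"
  define p' where "p' = per (sub T (Suc i) (Suc i + 3*\<tau> - 1))"
  have i1: "1 \<le> i" using assms(1) by (simp add: Rset_def)
  note A = R_per[OF assms(1,3), folded p_def]
  note B = R_per[OF assms(2,3), folded p'_def]
  have si: "Suc (i - 1) = i" using i1 by simp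
  have PA: "Pw T (i-1) (3*\<tau> - 1) p" using A by blast
  have PB: "Pw T (Suc (i-1)) (3*\<tau> - 1) p'" using B si by simp
  have sum: "p + p' < 3*\<tau> - 1" using A B by linarith
  show ?thesis
  proof (cases "p \<le> p'")
    case True
    have "Pw T (Suc (i-1)) (3*\<tau> - 1) p" using Pw_step1[OF PA PB True sum] B by blast
    then have "Pw T (Suc i - 1) (3*\<tau> - 1) p" using si by simp
    moreover have "0 < p" "p \<le> 3*\<tau> - 1" using A sum by auto
    ultimately have "p' \<le> p" using B by blast
    then show ?thesis using True p_def p'_def by simp
  next
    case False
    have "Pw T (i-1) (3*\<tau> - 1) p'" using Pw_step2[OF PA PB _ sum] False A by simp
    moreover have "0 < p'" "p' \<le> 3*\<tau> - 1" using B sum by auto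
    ultimately have "p \<le> p'" using A by blast
    then show ?thesis using False by simp
  qed
qed



lemma RUN:
  assumes jR: "j \<in> Rset T \<tau>" and t1: "1 \<le> \<tau>"
  defines "p \<equiv> per (sub T j (j + 3*\<tau> - 1))" and "e \<equiv> endp T \<tau> j"
  shows "j + 3*\<tau> - 1 \<le> e" "e \<le> length T + 1" "Pw T (j-1) (e-j) p"
    "e \<le> length T \<Longrightarrow> T!(e-1) \<noteq> T!(e-1-p)"
proof -
  define L where "L = 3*\<tau> - 1"
  define m where "m = (LEAST j'. j \<le> j' \<and> j' \<notin> Rset T \<tau>)"
  have e: "e = m + 3*\<tau> - 2" unfolding e_def endp_def m_def by simp
  have ex: "j \<le> length T + 3 \<and> length T + 3 \<notin> Rset T \<tau>"
    using jR t1 by (auto simp: Rset_def)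
  have m1: "j \<le> m \<and> m \<notin> Rset T \<tau>" unfolding m_def by (rule LeastI, rule ex)
  have m2: "i \<in> Rset T \<tau>" if "j \<le> i" "i < m" for i
    using not_less_Least[of i "\<lambda>j'. j \<le> j' \<and> j' \<notin> Rset T \<tau>"] that unfolding m_def by blast
  have jm: "j < m" using m1 jR by (metis le_neq_implies_less)
  have j1: "1 \<le> j" using jR by (simp add: Rset_def)
  have pc: "j + k < m \<longrightarrow> per (sub T (j+k) (j + k + 3*\<tau> - 1)) = p" for k
  proof (induction k)
    case 0 then show ?case by (simp add: p_def)
  next
    case (Suc k)
    show ?case
    proof
      assume a: "j + Suc k < m"
      have "per (sub T (j+k) (j + k + 3*\<tau> - 1)) = per (sub T (Suc (j+k)) (Suc (j+k) + 3*\<tau> - 1))"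
        using m2 a t1 by (intro R_step) auto
      then show "per (sub T (j + Suc k) (j + Suc k + 3*\<tau> - 1)) = p" using Suc a by simp
    qed
  qed
  have pc': "per (sub T i (i + 3*\<tau> - 1)) = p" if "j \<le> i" "i < m" for i
    using pc[of "i - j"] that by simp
  have mR: "m - 1 \<in> Rset T \<tau>" using m2 jm by simp
  then have mb: "m - 1 + 3*\<tau> \<le> length T + 2" by (simp add: Rset_def)
  show "j + 3*\<tau> - 1 \<le> e" using e jm t1 by simp
  show "e \<le> length T + 1" using e mb jm j1 t1 by simp
  have Pi: "Pw T (i-1) L p \<and> 0 < p \<and> 3*p \<le> \<tau>" if "j \<le> i" "i < m" for i
    using R_per[OF m2[OF that] t1] pc'[OF that] unfolding L_def by simp
  show "Pw T (j-1) (e-j) p"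
  proof (rule PwI)
    fix y assume y: "j - 1 \<le> y" "y + p < j - 1 + (e - j)"
    define i where "i = max j (y + p + 2 - L)"
    have pp: "0 < p" "3*p \<le> \<tau>" using Pi[of j] jm by auto
    have ii: "j \<le> i" "i < m" using y e jm t1 pp j1 unfolding i_def L_def by auto
    have "i - 1 \<le> y" "y + p < i - 1 + L" using y pp t1 j1 unfolding i_def L_def by auto
    then show "T!y = T!(y+p)" using PwD[of T "i-1" L p y] Pi[OF ii] by blast
  qed
  show "T!(e-1) \<noteq> T!(e-1-p)" if en: "e \<le> length T"
  proof
    assume eq: "T!(e-1) = T!(e-1-p)"
    have pp: "0 < p" "3*p \<le> \<tau>" using Pi[of j] jm by auto
    have m2': "2 \<le> m" using jm j1 by simp
    have P0: "Pw T (m-1-1) L p" using Pi[of "m-1"] jm by simp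
    have P1: "Pw T (m-1) L p"
    proof (rule PwI)
      fix y assume y: "m - 1 \<le> y" "y + p < m - 1 + L"
      show "T!y = T!(y+p)"
      proof (cases "y + p < m - 1 - 1 + L")
        case True then show ?thesis using PwD[OF P0] y by simp
      next
        case False
        then have "y + p = e - 1" using y e m2' t1 unfolding L_def by simp
        then have "y = e - 1 - p" "y + p = e - 1" by auto
        then show ?thesis using eq by simp
      qed
    qed
    have mm: "1 \<le> m" "m + 3*\<tau> \<le> length T + 2" using m2' en e t1 by auto
    have "is_period (sub T m (m + 3*\<tau> - 1)) p" using win(3)[OF mm t1] P1 pp t1 unfolding L_def by simp
    moreover have "sub T m (m + 3*\<tau> - 1) \<noteq> []" using win(1)[OF mm t1] t1 by auto
    ultimately have "per (sub T m (m + 3*\<tau> - 1)) \<le> p" using per_basic(2) by blast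
    then have "m \<in> Rset T \<tau>" using mm pp unfolding Rset_def by auto
    then show False using m1 by blast
  qed
qed


lemma STRUCT:
  assumes jR: "j \<in> Rset T \<tau>" and t1: "1 \<le> \<tau>"
  defines "p \<equiv> per (sub T j (j + 3*\<tau> - 1))" and "e \<equiv> endp T \<tau> j"
  shows "Lroot T \<tau> j = Min {take p (drop u (sub T j (j + 3*\<tau> - 1))) | u. u < p}"
    "\<exists>t0<p. Lroot T \<tau> j = take p (drop t0 (sub T j (j + 3*\<tau> - 1)))"
    "length (Lroot T \<tau> j) = p"
    "\<And>t0. t0 < p \<Longrightarrow> Lroot T \<tau> j = take p (drop t0 (sub T j (j + 3*\<tau> - 1))) \<Longrightarrow>
       Lhead T \<tau> j = t0 \<and> (\<forall>i < e - j. T!(j-1+i) = Lroot T \<tau> j ! ((i + p - t0) mod p))"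
proof -
  let ?W = "sub T j (j + 3*\<tau> - 1)"
  define X where "X = sub T j e"
  note r = RUN[OF jR t1, folded p_def e_def]
  note rp = R_per[OF jR t1, folded p_def]
  have j1: "1 \<le> j" using jR by (simp add: Rset_def)
  have lX: "length X = e - j" using r j1 unfolding X_def sub_def by simp
  have nX: "X!i = T!(j-1+i)" if "i < e - j" for i using that r j1 unfolding X_def sub_def by simp
  have WX: "?W = take (3*\<tau> - 1) X" unfolding X_def sub_def using r j1
    by (simp add: min_def)
  have pp: "0 < p" "3*p \<le> \<tau>" using rp by auto
  have ws: "sub T (j+t) (j+t+p) = take p (drop t ?W)" if "t < p" for t
    using that pp j1 unfolding sub_def by (simp add: drop_take take_take min_def add.commute add.left_commute)
  have set: "{sub T (j+t) (j+t+p) | t. t < p} = {take p (drop u ?W) | u. u < p}"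
    using ws by (auto; metis)
  show lr: "Lroot T \<tau> j = Min {take p (drop u ?W) | u. u < p}"
    unfolding Lroot_def Let_def p_def[symmetric] set ..
  have fin: "finite {take p (drop u ?W) | u. u < p}" by simp
  have nemp: "{take p (drop u ?W) | u. u < p} \<noteq> {}" using pp by auto
  show ex: "\<exists>t0<p. Lroot T \<tau> j = take p (drop t0 ?W)"
    using Min_in[OF fin nemp] lr by auto
  have lW: "length ?W = 3*\<tau> - 1" using win(1) jR t1 j1 by (simp add: Rset_def)
  have lt: "length (take p (drop t0 ?W)) = p" if "t0 < p" for t0 using that lW pp by simp
  show "length (Lroot T \<tau> j) = p" using ex lt by auto
  fix t0 assume t0: "t0 < p" and H: "Lroot T \<tau> j = take p (drop t0 ?W)"
  have HX: "Lroot T \<tau> j = take p (drop t0 X)" using H WX t0 pp by (simp add: drop_take take_take min_def)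
  have l2: "2*p \<le> length X" using lX r pp by simp
  have per: "\<forall>i. i + p < length X \<longrightarrow> X!i = X!(i+p)"
  proof (intro allI impI)
    fix i assume i: "i + p < length X"
    have "T!(j-1+i) = T!(j-1+i+p)" using i lX by (intro PwD[OF r(3)]) auto
    then show "X!i = X!(i+p)" using nX i lX by (simp add: add.assoc)
  qed
  have prim: "\<forall>d. 0 < d \<and> d < p \<longrightarrow> \<not> (\<forall>i. i + d < length X \<longrightarrow> X!i = X!(i+d))"
  proof (intro allI impI notI)
    fix d assume d: "0 < d \<and> d < p" and A: "\<forall>i. i + d < length X \<longrightarrow> X!i = X!(i+d)"
    have "Pw T (j-1) (3*\<tau> - 1) d"
    proof (rule PwI)
      fix y assume y: "j - 1 \<le> y" "y + d < j - 1 + (3*\<tau> - 1)"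
      have "X!(y-(j-1)) = X!(y-(j-1)+d)" using A y lX r by auto
      moreover have "X!(y-(j-1)) = T!y" using nX[of "y-(j-1)"] y r by simp
      moreover have "X!(y-(j-1)+d) = T!(y+d)" using nX[of "y-(j-1)+d"] y r by simp
      ultimately show "T!y = T!(y+d)" by simp
    qed
    then have "p \<le> d" using rp d pp by auto
    then show False using d by simp
  qed
  note hd = head[OF pp(1) l2 per prim HX t0]
  have "Lhead T \<tau> j = (THE s. decomp X (Lroot T \<tau> j) s)"
    unfolding Lhead_def Let_def decomp_def X_def e_def ..
  then show "Lhead T \<tau> j = t0 \<and> (\<forall>i < e - j. T!(j-1+i) = Lroot T \<tau> j ! ((i + p - t0) mod p))"
    using hd nX lX by auto
qed


lemma TYPE:
  assumes jR: "j \<in> Rset T \<tau>" and t1: "1 \<le> \<tau>"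
  shows "ltype T \<tau> j = (if tyv (drop (j-1) T) (endp T \<tau> j - j) (per (sub T j (j + 3*\<tau> - 1))) then 1 else -1)"
proof -
  let ?p = "per (sub T j (j + 3*\<tau> - 1))" and ?e = "endp T \<tau> j"
  note r = RUN[OF jR t1]
  have j1: "1 \<le> j" using jR by (simp add: Rset_def)
  have lH: "length (Lroot T \<tau> j) = ?p" using STRUCT(3)[OF jR t1] .
  have pp: "0 < ?p" "3 * ?p \<le> \<tau>" using R_per[OF jR t1] by auto
  have a: "?e - j < length (drop (j-1) T) \<longleftrightarrow> ?e \<le> length T" using r j1 t1 by auto
  have ej: "j + (?e - j) = ?e" "j \<le> ?e" using r(1) t1 by auto
  have b: "drop (j-1) T ! (?e - j) = T!(?e - 1)" if "?e \<le> length T" using that r j1 ej by simp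
  have c: "drop (j-1) T ! (?e - j - ?p) = T!(?e - ?p - 1)" if "?e \<le> length T"
  proof -
    have "j - 1 + (?e - j - ?p) = ?e - ?p - 1" using ej r(1) pp t1 j1 by linarith
    moreover have "j - 1 \<le> length T" using ej r(2) by simp
    ultimately show ?thesis by (simp add: nth_drop)
  qed
  show ?thesis unfolding ltype_def Let_def tyv_def lH using a b c by auto
qed

lemma SAME:
  assumes jR: "j \<in> RsH T \<tau> s H" and t1: "1 \<le> \<tau>"
  shows "per (sub T j (j + 3*\<tau> - 1)) = length H"
    "\<forall>i < endp T \<tau> j - j. T!(j-1+i) = H ! ((i + length H - s) mod length H)"
proof -
  have R: "j \<in> Rset T \<tau>" "Lroot T \<tau> j = H" "Lhead T \<tau> j = s" using jR by (auto simp: RsH_def)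
  show p: "per (sub T j (j + 3*\<tau> - 1)) = length H" using STRUCT(3)[OF R(1) t1] R by simp
  obtain t0 where t0: "t0 < per (sub T j (j + 3*\<tau> - 1))"
    "Lroot T \<tau> j = take (per (sub T j (j + 3*\<tau> - 1))) (drop t0 (sub T j (j + 3*\<tau> - 1)))"
    using STRUCT(2)[OF R(1) t1] by blast
  note st = STRUCT(4)[OF R(1) t1 t0]
  then show "\<forall>i < endp T \<tau> j - j. T!(j-1+i) = H ! ((i + length H - s) mod length H)"
    using R p by simp
qed

lemma FORWARD:
  assumes jR: "j \<in> RsH T \<tau> s H" and t1: "1 \<le> \<tau>" and j': "1 \<le> j'"
    and lce: "3*\<tau> - 1 \<le> LCE T j j'"
  shows "j' \<in> RsH T \<tau> s H"
proof -
  have R: "j \<in> Rset T \<tau>" "Lroot T \<tau> j = H" "Lhead T \<tau> j = s" using jR by (auto simp: RsH_def)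
  have j1: "1 \<le> j" using R by (simp add: Rset_def)
  note g = lcp_ge_nth[OF lce[unfolded LCE_def suf_def]]
  have tk: "take (3*\<tau> - 1) (drop (j-1) T) = take (3*\<tau> - 1) (drop (j'-1) T)"
    using g by (intro take_eq_nth) auto
  have WW: "sub T j' (j' + 3*\<tau> - 1) = sub T j (j + 3*\<tau> - 1)"
    using tk unfolding sub_def by simp
  have R': "j' \<in> Rset T \<tau>" using R(1) WW g(2) j' t1 unfolding Rset_def by auto
  have lr: "Lroot T \<tau> j' = Lroot T \<tau> j"
    using STRUCT(1)[OF R(1) t1] STRUCT(1)[OF R' t1] WW by simp
  obtain t0 where t0: "t0 < per (sub T j (j + 3*\<tau> - 1))"
    "Lroot T \<tau> j = take (per (sub T j (j + 3*\<tau> - 1))) (drop t0 (sub T j (j + 3*\<tau> - 1)))"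
    using STRUCT(2)[OF R(1) t1] by blast
  have h1: "Lhead T \<tau> j = t0" using STRUCT(4)[OF R(1) t1 t0] by simp
  have h2: "Lhead T \<tau> j' = t0" using STRUCT(4)[OF R' t1, of t0] t0 WW lr by simp
  show ?thesis using R' lr h1 h2 R unfolding RsH_def by simp
qed


lemma U:
  assumes jR: "j \<in> Rset T \<tau>" and t1: "1 \<le> \<tau>"
  defines "p \<equiv> per (sub T j (j + 3*\<tau> - 1))" and "t \<equiv> endp T \<tau> j - j" and "u \<equiv> drop (j-1) T"
  shows "0 < p" "p \<le> t" "3*\<tau> - 1 \<le> t" "t \<le> length u" "\<And>i. i < t \<Longrightarrow> u!i = T!(j-1+i)"
    "\<forall>i. i + p < t \<longrightarrow> u!i = u!(i+p)" "t < length u \<Longrightarrow> u!t \<noteq> u!(t-p)"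
proof -
  note r = RUN[OF jR t1, folded p_def]
  have j1: "1 \<le> j" using jR by (simp add: Rset_def)
  have pp: "0 < p" "3 * p \<le> \<tau>" using R_per[OF jR t1, folded p_def] by auto
  have ej: "j + t = endp T \<tau> j" "j \<le> endp T \<tau> j" using r(1) t1 unfolding t_def by auto
  have jl: "j - 1 \<le> length T" using ej r(2) by simp
  have nd: "u!k = T!(j-1+k)" for k unfolding u_def using jl by (simp add: nth_drop)
  show "0 < p" by (rule pp(1))
  show "3*\<tau> - 1 \<le> t" using r(1) unfolding t_def by simp
  then show "p \<le> t" using pp by simp
  show "t \<le> length u" using r(2) ej j1 unfolding u_def by simp
  show "\<And>i. i < t \<Longrightarrow> u!i = T!(j-1+i)" using nd by simp
  show "\<forall>i. i + p < t \<longrightarrow> u!i = u!(i+p)"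
  proof (intro allI impI)
    fix i assume "i + p < t"
    then have "T!(j-1+i) = T!(j-1+i+p)" by (intro PwD[OF r(3)]) (auto simp: t_def)
    then show "u!i = u!(i+p)" using nd by (simp add: add.assoc)
  qed
  show "t < length u \<Longrightarrow> u!t \<noteq> u!(t-p)"
  proof -
    assume a: "t < length u"
    then have el: "endp T \<tau> j \<le> length T" using ej j1 unfolding u_def by simp
    have "j - 1 + t = endp T \<tau> j - 1" "j - 1 + (t - p) = endp T \<tau> j - 1 - p"
      using ej j1 pp \<open>3*\<tau> - 1 \<le> t\<close> by auto
    then show "u!t \<noteq> u!(t-p)" using r(4)[OF el] nd by simp
  qed
qed

lemma PAIR:
  assumes jR: "j \<in> RsH T \<tau> s H" and jR': "j' \<in> RsH T \<tau> s H" and t1: "1 \<le> \<tau>"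
  shows "(let t = endp T \<tau> j - j; t' = endp T \<tau> j' - j' in
              min t t' \<le> LCE T j j'
            \<and> (ltype T \<tau> j \<noteq> ltype T \<tau> j' \<longrightarrow>
                  (suf T j < suf T j' \<longleftrightarrow> ltype T \<tau> j < ltype T \<tau> j'))
            \<and> (ltype T \<tau> j = -1 \<and> ltype T \<tau> j' = -1 \<and> t \<noteq> t' \<longrightarrow>
                  (suf T j < suf T j' \<longleftrightarrow> t < t'))
            \<and> (ltype T \<tau> j = 1 \<and> ltype T \<tau> j' = 1 \<and> t \<noteq> t' \<longrightarrow>
                  (suf T j < suf T j' \<longleftrightarrow> t > t'))
            \<and> ((ltype T \<tau> j \<noteq> ltype T \<tau> j' \<or> t \<noteq> t') \<longrightarrow> LCE T j j' = min t t'))"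
proof -
  have R: "j \<in> Rset T \<tau>" using jR by (auto simp: RsH_def)
  have R': "j' \<in> Rset T \<tau>" using jR' by (auto simp: RsH_def)
  note S = SAME[OF jR t1] and S' = SAME[OF jR' t1]
  note u = U[OF R t1, unfolded S(1)] and u' = U[OF R' t1, unfolded S'(1)]
  let ?t = "endp T \<tau> j - j" and ?t' = "endp T \<tau> j' - j'"
  let ?u = "drop (j-1) T" and ?u' = "drop (j'-1) T"
  have ag: "\<forall>i<min ?t ?t'. ?u!i = ?u'!i"
  proof (intro allI impI)
    fix i assume i: "i < min ?t ?t'"
    have "?u!i = T!(j-1+i)" using u(5) i by simp
    also have "\<dots> = H ! ((i + length H - s) mod length H)" using S(2) i by simp
    also have "\<dots> = T!(j'-1+i)" using S'(2) i by simp
    also have "\<dots> = ?u'!i" using u'(5) i by simp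
    finally show "?u!i = ?u'!i" .
  qed
  note c = compare[OF u(1,2) u'(2) u(4) u'(4) ag u(6) u'(6) u(7) u'(7)]
  have ty: "ltype T \<tau> j = (if tyv ?u ?t (length H) then 1 else -1)"
    using TYPE[OF R t1] S(1) by simp
  have ty': "ltype T \<tau> j' = (if tyv ?u' ?t' (length H) then 1 else -1)"
    using TYPE[OF R' t1] S'(1) by simp
  show ?thesis unfolding Let_def LCE_def suf_def ty ty' using c by auto
qed

theorem lemma5p11:
  fixes T :: "nat list" and \<sigma> n \<tau> s j :: nat and \<mu> :: real and H :: "nat list"
  assumes "n = length T"
    and "\<forall>c \<in> set T. c < \<sigma>"
    and "2 \<le> \<sigma>" and "real \<sigma> < real n powr (1/7)"
    and "0 < \<mu>" and "\<mu> < 1/6"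
    and "\<tau> = nat \<lfloor>\<mu> * log (real \<sigma>) (real n)\<rfloor>" and "1 \<le> \<tau>"
    and "j \<in> RsH T \<tau> s H"
  shows "\<forall>j' \<in> {1..n}. (3 * \<tau> - 1 \<le> LCE T j j' \<longleftrightarrow> j' \<in> RsH T \<tau> s H)
    \<and> (\<forall>j' \<in> RsH T \<tau> s H.
           (let t = endp T \<tau> j - j; t' = endp T \<tau> j' - j' in
              min t t' \<le> LCE T j j'
            \<and> (ltype T \<tau> j \<noteq> ltype T \<tau> j' \<longrightarrow>
                  (suf T j < suf T j' \<longleftrightarrow> ltype T \<tau> j < ltype T \<tau> j'))
            \<and> (ltype T \<tau> j = -1 \<and> ltype T \<tau> j' = -1 \<and> t \<noteq> t' \<longrightarrow>
                  (suf T j < suf T j' \<longleftrightarrow> t < t'))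
            \<and> (ltype T \<tau> j = 1 \<and> ltype T \<tau> j' = 1 \<and> t \<noteq> t' \<longrightarrow>
                  (suf T j < suf T j' \<longleftrightarrow> t > t'))
            \<and> ((ltype T \<tau> j \<noteq> ltype T \<tau> j' \<or> t \<noteq> t') \<longrightarrow> LCE T j j' = min t t')))"
proof (intro conjI ballI)
  note jR = assms(9) and t1 = assms(8)
  fix j' assume j': "j' \<in> RsH T \<tau> s H"
  show "let t = endp T \<tau> j - j; t' = endp T \<tau> j' - j' in
              min t t' \<le> LCE T j j'
            \<and> (ltype T \<tau> j \<noteq> ltype T \<tau> j' \<longrightarrow>
                  (suf T j < suf T j' \<longleftrightarrow> ltype T \<tau> j < ltype T \<tau> j'))
            \<and> (ltype T \<tau> j = -1 \<and> ltype T \<tau> j' = -1 \<and> t \<noteq> t' \<longrightarrow>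
                  (suf T j < suf T j' \<longleftrightarrow> t < t'))
            \<and> (ltype T \<tau> j = 1 \<and> ltype T \<tau> j' = 1 \<and> t \<noteq> t' \<longrightarrow>
                  (suf T j < suf T j' \<longleftrightarrow> t > t'))
            \<and> ((ltype T \<tau> j \<noteq> ltype T \<tau> j' \<or> t \<noteq> t') \<longrightarrow> LCE T j j' = min t t')"
    by (rule PAIR[OF jR j' t1])
next
  note jR = assms(9) and t1 = assms(8)
  fix j' assume j': "j' \<in> {1..n}"
  show "3 * \<tau> - 1 \<le> LCE T j j' \<longleftrightarrow> j' \<in> RsH T \<tau> s H"
  proof
    assume "3 * \<tau> - 1 \<le> LCE T j j'"
    then show "j' \<in> RsH T \<tau> s H" using FORWARD[OF jR t1] j' by simp
  next
    assume a: "j' \<in> RsH T \<tau> s H"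
    have R: "j \<in> Rset T \<tau>" using jR by (auto simp: RsH_def)
    have R': "j' \<in> Rset T \<tau>" using a by (auto simp: RsH_def)
    have "3*\<tau> - 1 \<le> endp T \<tau> j - j" "3*\<tau> - 1 \<le> endp T \<tau> j' - j'"
      using U(3)[OF R t1] U(3)[OF R' t1] by auto
    moreover have "min (endp T \<tau> j - j) (endp T \<tau> j' - j') \<le> LCE T j j'"
      using PAIR[OF jR a t1] unfolding Let_def by blast
    ultimately show "3 * \<tau> - 1 \<le> LCE T j j'" by linarith
  qed
qed


end
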